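(* Let $(\Omega,P,\pi)$ be a finite irreducible reversible Markov chain (in continuous time), let $\epsilon\in(0,1)$, $k\ge0$, and let $A\subset\Omega$ satisfy $\pi(A)\ge1-\epsilon$. Then there exists $I\subset\Omega$ with $\pi(I)\ge1-\frac{\epsilon}{2\cdot3^k}$ such that $$\mathbb E_z[T_A]\le(3+k)(1-\epsilon)^{-1}t_{\mathrm{rel}}\log3\quad\text{for every } z\in I.$$
   Context: Continuous-time chain with heat kernel $H_t(x,y)=\sum_{j\ge0}e^{-t}\frac{t^j}{j!}P^j(x,y)$; reversible means $\pi(x)P(x,y)=\pi(y)P(y,x)$. $\mathbb E_z$: expectation for the chain started at $z$. $T_A:=\inf\{t\ge0:X_t\in A\}$. $t_{\mathrm{rel}}:=(1-\lambda_2)^{-1}$, $\lambda_2$ the second largest eigenvalue of $P$. *)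

theory Defs
  imports "HOL-Analysis.Analysis" "Jordan_Normal_Form.Char_Poly"
begin

text \<open>State space Omega = {..<n}; P is the transition matrix, pi the reversible measure.\<close>

definition trans_mat :: "nat \<Rightarrow> (nat \<Rightarrow> nat \<Rightarrow> real) \<Rightarrow> real mat" where
  "trans_mat n P = mat n n (\<lambda>(i,j). P i j)"

definition irreducible_chain :: "nat \<Rightarrow> (nat \<Rightarrow> nat \<Rightarrow> real) \<Rightarrow> bool" where
  "irreducible_chain n P \<longleftrightarrow>
     (\<forall>i<n. \<forall>j<n. \<exists>m. (trans_mat n P ^\<^sub>m m) $$ (i,j) > 0)"

definition eigenvalues_desc :: "nat \<Rightarrow> (nat \<Rightarrow> nat \<Rightarrow> real) \<Rightarrow> real list" where
  "eigenvalues_desc n P = rev (sorted_list_of_multiset (proots (char_poly (trans_mat n P))))"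

definition lambda2 :: "nat \<Rightarrow> (nat \<Rightarrow> nat \<Rightarrow> real) \<Rightarrow> real" where
  "lambda2 n P = eigenvalues_desc n P ! 1"

definition t_rel :: "nat \<Rightarrow> (nat \<Rightarrow> nat \<Rightarrow> real) \<Rightarrow> real" where
  "t_rel n P = 1 / (1 - lambda2 n P)"

text \<open>avoid n P A j z = probability that the (jump) chain started at z stays outside A
  at steps 0,...,j.\<close>
fun avoid :: "nat \<Rightarrow> (nat \<Rightarrow> nat \<Rightarrow> real) \<Rightarrow> nat set \<Rightarrow> nat \<Rightarrow> nat \<Rightarrow> real" where
  "avoid n P A 0 z = (if z \<in> A then 0 else 1)"
| "avoid n P A (Suc j) z = (if z \<in> A then 0 else (\<Sum>y<n. P z y * avoid n P A j y))"

text \<open>Survival probability P_z(T_A > t) of the continuous-time chain with heat kernel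
  H_t = sum_j e^{-t} t^j/j! P^j (Poissonised jump chain).\<close>
definition survival :: "nat \<Rightarrow> (nat \<Rightarrow> nat \<Rightarrow> real) \<Rightarrow> nat set \<Rightarrow> nat \<Rightarrow> real \<Rightarrow> ennreal" where
  "survival n P A z t = (\<Sum>j. ennreal (exp (-t) * t ^ j / fact j * avoid n P A j z))"

definition exp_hit :: "nat \<Rightarrow> (nat \<Rightarrow> nat \<Rightarrow> real) \<Rightarrow> nat set \<Rightarrow> nat \<Rightarrow> ennreal" where
  "exp_hit n P A z = (\<integral>\<^sup>+ t. survival n P A z t * indicator {0..} t \<partial>lborel)"

end

theory Submission
  imports Defs "HOL-Probability.Distributions"
begin


locale rchain =
  fixes n :: nat and P :: "nat \<Rightarrow> nat \<Rightarrow> real" and pi :: "nat \<Rightarrow> real"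
  assumes n2: "n \<ge> 2"
    and P_nonneg: "\<And>i j. i<n \<Longrightarrow> j<n \<Longrightarrow> P i j \<ge> 0"
    and P_stoch: "\<And>i. i<n \<Longrightarrow> (\<Sum>j<n. P i j) = 1"
    and pi_pos: "\<And>i. i<n \<Longrightarrow> pi i > 0"
    and pi_sum: "(\<Sum>i<n. pi i) = 1"
    and rev: "\<And>i j. i<n \<Longrightarrow> j<n \<Longrightarrow> pi i * P i j = pi j * P j i"
    and irred: "irreducible_chain n P"
begin

definition ip :: "(nat \<Rightarrow> real) \<Rightarrow> (nat \<Rightarrow> real) \<Rightarrow> real" where
  "ip f g = (\<Sum>i<n. pi i * f i * g i)"

definition Pv :: "(nat \<Rightarrow> real) \<Rightarrow> nat \<Rightarrow> real" where
  "Pv f = (\<lambda>i. \<Sum>j<n. P i j * f j)"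

lemma ip_comm: "ip f g = ip g f"
  unfolding ip_def by (simp add: mult_ac)

lemma ip_add1: "ip (\<lambda>i. f i + g i) h = ip f h + ip g h"
  unfolding ip_def by (simp add: algebra_simps sum.distrib)

lemma ip_diff1: "ip (\<lambda>i. f i - g i) h = ip f h - ip g h"
  unfolding ip_def by (simp add: algebra_simps sum_subtractf)

lemma ip_scale1: "ip (\<lambda>i. c * f i) h = c * ip f h"
  unfolding ip_def by (simp add: algebra_simps sum_distrib_left)

lemma ip_add2: "ip h (\<lambda>i. f i + g i) = ip h f + ip h g"
  unfolding ip_def by (simp add: algebra_simps sum.distrib)

lemma ip_diff2: "ip h (\<lambda>i. f i - g i) = ip h f - ip h g"
  unfolding ip_def by (simp add: algebra_simps sum_subtractf)

lemma ip_scale2: "ip h (\<lambda>i. c * f i) = c * ip h f"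
  unfolding ip_def by (simp add: algebra_simps sum_distrib_left)

lemma ip_cong: "(\<And>i. i<n \<Longrightarrow> f i = f' i) \<Longrightarrow> (\<And>i. i<n \<Longrightarrow> g i = g' i) \<Longrightarrow> ip f g = ip f' g'"
  unfolding ip_def by (intro sum.cong) auto

lemma ip_nonneg: "ip f f \<ge> 0"
  unfolding ip_def by (intro sum_nonneg) (simp add: mult.assoc less_imp_le pi_pos)

lemma ip_zero: assumes "ip f f = 0" "i<n" shows "f i = 0"
proof -
  have "\<forall>j\<in>{..<n}. pi j * f j * f j = 0"
    using assms(1) unfolding ip_def
    by (subst sum_nonneg_eq_0_iff[symmetric]) (auto simp: mult.assoc less_imp_le pi_pos)
  with assms(2) pi_pos[OF assms(2)] show ?thesis by force
qed

lemma ip_one: "ip (\<lambda>_. 1) (\<lambda>_. 1) = 1"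
  unfolding ip_def using pi_sum by simp

lemma Pv_add: "Pv (\<lambda>i. f i + g i) = (\<lambda>i. Pv f i + Pv g i)"
  unfolding Pv_def by (simp add: algebra_simps sum.distrib)

lemma Pv_diff: "Pv (\<lambda>i. f i - g i) = (\<lambda>i. Pv f i - Pv g i)"
  unfolding Pv_def by (simp add: algebra_simps sum_subtractf)

lemma Pv_scale: "Pv (\<lambda>i. c * f i) = (\<lambda>i. c * Pv f i)"
  unfolding Pv_def by (simp add: algebra_simps sum_distrib_left)

lemma Pv_const: "i < n \<Longrightarrow> Pv (\<lambda>_. c) i = c"
  unfolding Pv_def using P_stoch by (simp add: sum_distrib_right[symmetric])

lemma Pv_cong: "(\<And>i. i<n \<Longrightarrow> f i = f' i) \<Longrightarrow> Pv f = Pv f'"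
  unfolding Pv_def by (intro ext sum.cong) auto

lemma ip_Pv_sym: "ip f (Pv g) = ip (Pv f) g"
proof -
  have "ip f (Pv g) = (\<Sum>i<n. \<Sum>j<n. pi i * P i j * f i * g j)"
    unfolding ip_def Pv_def by (simp add: sum_distrib_left mult_ac)
  also have "\<dots> = (\<Sum>i<n. \<Sum>j<n. pi j * P j i * f i * g j)"
    by (intro sum.cong refl) (simp add: rev)
  also have "\<dots> = (\<Sum>j<n. \<Sum>i<n. pi j * P j i * f i * g j)"
    by (rule sum.swap)
  also have "\<dots> = ip (Pv f) g"
    unfolding ip_def Pv_def by (simp add: sum_distrib_left sum_distrib_right mult_ac)
  finally show ?thesis .
qed

lemma colsum: "j < n \<Longrightarrow> (\<Sum>i<n. pi i * P i j) = pi j"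
proof -
  assume j: "j<n"
  have "(\<Sum>i<n. pi i * P i j) = (\<Sum>i<n. pi j * P j i)" by (intro sum.cong) (auto simp: rev j)
  also have "\<dots> = pi j" using P_stoch[OF j] by (simp add: sum_distrib_left[symmetric])
  finally show ?thesis .
qed

lemma ip_Pv_lower: "ip f (Pv f) \<ge> - ip f f"
proof -
  have e: "ip f (Pv f) = (\<Sum>i<n. \<Sum>j<n. pi i * P i j * (f i * f j))"
    unfolding ip_def Pv_def by (simp add: sum_distrib_left mult_ac)
  have "2 * (\<Sum>i<n. \<Sum>j<n. pi i * P i j * (f i * f j)) = (\<Sum>i<n. \<Sum>j<n. pi i * P i j * (2 * f i * f j))"
    by (simp add: sum_distrib_left mult_ac)
  also have "\<dots> \<ge> (\<Sum>i<n. \<Sum>j<n. - (pi i * P i j * (f i ^ 2 + f j ^ 2)))"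
  proof (intro sum_mono)
    fix i j assume "i \<in> {..<n}" "j \<in> {..<n}"
    then have "pi i * P i j \<ge> 0" using pi_pos P_nonneg by (auto intro: mult_nonneg_nonneg less_imp_le)
    moreover have "2 * f i * f j \<ge> - (f i ^ 2 + f j ^ 2)"
      using sum_squares_ge_zero[of "f i + f j" 0] by (simp add: power2_eq_square algebra_simps)
    ultimately show "pi i * P i j * (2 * f i * f j) \<ge> - (pi i * P i j * (f i ^ 2 + f j ^ 2))"
      using mult_left_mono[of "- (f i ^ 2 + f j ^ 2)" "2 * f i * f j" "pi i * P i j"] by (simp add: algebra_simps)
  qed
  also have "(\<Sum>i<n. \<Sum>j<n. - (pi i * P i j * (f i ^ 2 + f j ^ 2)))
      = - ((\<Sum>i<n. \<Sum>j<n. pi i * P i j * f i ^ 2) + (\<Sum>i<n. \<Sum>j<n. pi i * P i j * f j ^ 2))"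
    by (simp add: sum.distrib[symmetric] sum_negf[symmetric] distrib_left)
  also have "(\<Sum>i<n. \<Sum>j<n. pi i * P i j * f i ^ 2) = ip f f"
    unfolding ip_def
    by (intro sum.cong refl) (simp add: sum_distrib_right[symmetric] sum_distrib_left[symmetric] P_stoch power2_eq_square mult_ac)
  also have "(\<Sum>i<n. \<Sum>j<n. pi i * P i j * f j ^ 2) = (\<Sum>j<n. \<Sum>i<n. pi i * P i j * f j ^ 2)"
    by (rule sum.swap)
  also have "\<dots> = ip f f"
    unfolding ip_def
    by (intro sum.cong refl) (simp add: sum_distrib_right[symmetric] colsum power2_eq_square)
  finally show ?thesis using e by simp
qed

end



context rchain begin

lemma trans_mat_carrier: "trans_mat n P \<in> carrier_mat n n"
  unfolding trans_mat_def by simp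

lemma trans_mat_index: "i < n \<Longrightarrow> j < n \<Longrightarrow> trans_mat n P $$ (i,j) = P i j"
  unfolding trans_mat_def by simp

lemma closed_pow_zero:
  assumes M: "M \<subseteq> {..<n}" and cl: "\<And>j l. j \<in> M \<Longrightarrow> l < n \<Longrightarrow> P j l > 0 \<Longrightarrow> l \<in> M"
    and j: "j \<in> M"
  shows "l < n \<Longrightarrow> l \<notin> M \<Longrightarrow> (trans_mat n P ^\<^sub>m m) $$ (j,l) = 0"
proof (induction m arbitrary: l)
  case 0
  then show ?case using M j trans_mat_carrier by auto
next
  case (Suc m)
  have jn: "j < n" using M j by auto
  have C: "trans_mat n P ^\<^sub>m m \<in> carrier_mat n n" using trans_mat_carrier by simp
  have "(trans_mat n P ^\<^sub>m Suc m) $$ (j,l) = (\<Sum>r\<in>{0..<n}. (trans_mat n P ^\<^sub>m m) $$ (j,r) * P r l)"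
    using C jn Suc.prems trans_mat_carrier
    by (simp add: scalar_prod_def trans_mat_index)
  also have "\<dots> = 0"
  proof (intro sum.neutral ballI)
    fix r assume r: "r \<in> {0..<n}"
    show "(trans_mat n P ^\<^sub>m m) $$ (j,r) * P r l = 0"
    proof (cases "r \<in> M")
      case True
      then have "\<not> P r l > 0" using cl Suc.prems by auto
      then have "P r l = 0" using P_nonneg[of r l] r Suc.prems by auto
      then show ?thesis by simp
    next
      case False
      then show ?thesis using Suc.IH r by auto
    qed
  qed
  finally show ?case .
qed

lemma closed_all:
  assumes M: "M \<subseteq> {..<n}" and cl: "\<And>j l. j \<in> M \<Longrightarrow> l < n \<Longrightarrow> P j l > 0 \<Longrightarrow> l \<in> M"
    and ne: "M \<noteq> {}"
  shows "M = {..<n}"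
proof (rule ccontr)
  assume "M \<noteq> {..<n}"
  then obtain l where l: "l < n" "l \<notin> M" using M by auto
  obtain j where j: "j \<in> M" using ne by auto
  then have "j < n" using M by auto
  then obtain m where "(trans_mat n P ^\<^sub>m m) $$ (j,l) > 0"
    using irred l unfolding irreducible_chain_def by blast
  with closed_pow_zero[OF M cl j l] show False by simp
qed

lemma no_eig_ge1:
  assumes A: "A \<subseteq> {..<n}" "A \<noteq> {}" and x: "x \<ge> 1"
    and vA: "\<And>i. i \<in> A \<Longrightarrow> v i = 0"
    and ev: "\<And>i. i < n \<Longrightarrow> i \<notin> A \<Longrightarrow> x * v i = (\<Sum>j<n. P i j * v j)"
    and i: "i < n"
  shows "v i = 0"
proof (rule ccontr)
  assume vi: "v i \<noteq> 0"
  define m where "m = Max ((\<lambda>i. \<bar>v i\<bar>) ` {..<n})"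
  have mge: "\<And>l. l < n \<Longrightarrow> \<bar>v l\<bar> \<le> m" unfolding m_def by (intro Max_ge) auto
  have mpos: "m > 0" using mge[OF i] vi by linarith
  define M where "M = {l. l < n \<and> \<bar>v l\<bar> = m}"
  have Msub: "M \<subseteq> {..<n}" unfolding M_def by auto
  have Mne: "M \<noteq> {}"
  proof -
    have "m \<in> (\<lambda>i. \<bar>v i\<bar>) ` {..<n}" unfolding m_def using i by (intro Max_in) auto
    then show ?thesis unfolding M_def by auto
  qed
  have cl: "l \<in> M" if j: "j \<in> M" and l: "l < n" and Pjl: "P j l > 0" for j l
  proof -
    have jn: "j < n" and vj: "\<bar>v j\<bar> = m" using j unfolding M_def by auto
    have jA: "j \<notin> A" using vA vj mpos by auto
    have "m \<le> x * m" using x mpos by simp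
    also have "x * m = \<bar>x * v j\<bar>" using vj x by (simp add: abs_mult)
    also have "\<dots> = \<bar>\<Sum>l<n. P j l * v l\<bar>" using ev[OF jn jA] by simp
    also have "\<dots> \<le> (\<Sum>l<n. \<bar>P j l * v l\<bar>)" by (rule sum_abs)
    also have "\<dots> = (\<Sum>l<n. P j l * \<bar>v l\<bar>)"
      using P_nonneg jn by (intro sum.cong) (auto simp: abs_mult)
    finally have le: "m \<le> (\<Sum>l<n. P j l * \<bar>v l\<bar>)" .
    have "(\<Sum>l<n. P j l * (m - \<bar>v l\<bar>)) = m * (\<Sum>l<n. P j l) - (\<Sum>l<n. P j l * \<bar>v l\<bar>)"
      by (simp add: algebra_simps sum_subtractf sum_distrib_left)
    also have "\<dots> = m - (\<Sum>l<n. P j l * \<bar>v l\<bar>)" using P_stoch[OF jn] by simp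
    finally have s0: "(\<Sum>l<n. P j l * (m - \<bar>v l\<bar>)) \<le> 0" using le by simp
    have nn: "\<forall>l\<in>{..<n}. P j l * (m - \<bar>v l\<bar>) \<ge> 0"
      using P_nonneg jn mge by (auto intro!: mult_nonneg_nonneg)
    then have "(\<Sum>l<n. P j l * (m - \<bar>v l\<bar>)) = 0" using s0 by (meson order.antisym sum_nonneg)
    then have "\<forall>l\<in>{..<n}. P j l * (m - \<bar>v l\<bar>) = 0" using nn by (subst sum_nonneg_eq_0_iff[symmetric]) auto
    then have "P j l * (m - \<bar>v l\<bar>) = 0" using l by auto
    then show ?thesis using Pjl l unfolding M_def by auto
  qed
  have "M = {..<n}" by (rule closed_all[OF Msub cl Mne])
  moreover obtain a where "a \<in> A" using A by auto
  ultimately have "\<bar>v a\<bar> = m" using A unfolding M_def by auto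
  then show False using vA[OF \<open>a \<in> A\<close>] mpos by simp
qed

lemma eig_le1:
  assumes i: "i < n" "v i \<noteq> 0"
    and ev: "\<And>i. i < n \<Longrightarrow> x * v i = (\<Sum>j<n. P i j * v j)"
  shows "x \<le> 1"
proof -
  define m where "m = Max ((\<lambda>i. \<bar>v i\<bar>) ` {..<n})"
  have mge: "\<And>l. l < n \<Longrightarrow> \<bar>v l\<bar> \<le> m" unfolding m_def by (intro Max_ge) auto
  have mpos: "m > 0" using mge[OF i(1)] i by linarith
  have "m \<in> (\<lambda>i. \<bar>v i\<bar>) ` {..<n}" unfolding m_def using i by (intro Max_in) auto
  then obtain j where jn: "j < n" and vj: "\<bar>v j\<bar> = m" by auto
  have "\<bar>x\<bar> * m = \<bar>x * v j\<bar>" using vj by (simp add: abs_mult)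
  also have "\<dots> = \<bar>\<Sum>l<n. P j l * v l\<bar>" using ev[OF jn] by simp
  also have "\<dots> \<le> (\<Sum>l<n. \<bar>P j l * v l\<bar>)" by (rule sum_abs)
  also have "\<dots> = (\<Sum>l<n. P j l * \<bar>v l\<bar>)"
    using P_nonneg jn by (intro sum.cong) (auto simp: abs_mult)
  also have "\<dots> \<le> (\<Sum>l<n. P j l * m)"
    using P_nonneg jn mge by (intro sum_mono mult_left_mono) auto
  also have "\<dots> = m" using P_stoch[OF jn] by (simp add: sum_distrib_right[symmetric])
  finally have "\<bar>x\<bar> * m \<le> 1 * m" by simp
  then have "\<bar>x\<bar> \<le> 1" using mpos by (rule mult_right_le_imp_le)
  then show ?thesis by simp
qed

lemma trans_mult_vec:
  assumes v: "v \<in> carrier_vec n" and i: "i < n"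
  shows "(trans_mat n P *\<^sub>v v) $ i = (\<Sum>j<n. P i j * v $ j)"
  using v i trans_mat_carrier
  by (simp add: scalar_prod_def trans_mat_index atLeast0LessThan)

lemma root_imp_eig:
  assumes "poly (char_poly (trans_mat n P)) x = 0"
  shows "\<exists>v. (\<exists>i<n. v i \<noteq> 0) \<and> (\<forall>i<n. x * v i = (\<Sum>j<n. P i j * v j))"
proof -
  have "eigenvalue (trans_mat n P) x"
    using eigenvalue_root_char_poly[OF trans_mat_carrier] assms by simp
  then obtain w where w: "eigenvector (trans_mat n P) w x" unfolding eigenvalue_def by auto
  then have wc: "w \<in> carrier_vec n" and w0: "w \<noteq> 0\<^sub>v n" and we: "trans_mat n P *\<^sub>v w = x \<cdot>\<^sub>v w"
    unfolding eigenvector_def using trans_mat_carrier by auto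
  have "\<exists>i<n. w $ i \<noteq> 0"
  proof (rule ccontr)
    assume "\<not> ?thesis"
    then have "w = 0\<^sub>v n" using wc by (intro eq_vecI) auto
    then show False using w0 by simp
  qed
  moreover have "\<forall>i<n. x * w $ i = (\<Sum>j<n. P i j * w $ j)"
  proof (intro allI impI)
    fix i assume i: "i < n"
    have "(trans_mat n P *\<^sub>v w) $ i = (x \<cdot>\<^sub>v w) $ i" using we by simp
    then show "x * w $ i = (\<Sum>j<n. P i j * w $ j)" using trans_mult_vec[OF wc i] wc i by simp
  qed
  ultimately show ?thesis by (intro exI[of _ "\<lambda>i. w $ i"]) auto
qed

lemma eig_imp_root:
  assumes "i < n" "v i \<noteq> 0" and ev: "\<And>i. i < n \<Longrightarrow> x * v i = (\<Sum>j<n. P i j * v j)"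
  shows "poly (char_poly (trans_mat n P)) x = 0"
proof -
  define w where "w = vec n v"
  have wc: "w \<in> carrier_vec n" unfolding w_def by simp
  have "w \<noteq> 0\<^sub>v n" using assms(1,2) unfolding w_def by (metis index_vec index_zero_vec(1))
  moreover have "trans_mat n P *\<^sub>v w = x \<cdot>\<^sub>v w"
  proof (rule eq_vecI)
    fix i assume "i < dim_vec (x \<cdot>\<^sub>v w)"
    then have i: "i < n" using wc by simp
    have "(trans_mat n P *\<^sub>v w) $ i = (\<Sum>j<n. P i j * w $ j)" by (rule trans_mult_vec[OF wc i])
    also have "\<dots> = (\<Sum>j<n. P i j * v j)" unfolding w_def by (intro sum.cong) auto
    also have "\<dots> = x * v i" using ev[OF i] by simp
    finally show "(trans_mat n P *\<^sub>v w) $ i = (x \<cdot>\<^sub>v w) $ i" using i wc unfolding w_def by simp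
  qed (use trans_mat_carrier wc in auto)
  ultimately have "eigenvector (trans_mat n P) w x"
    unfolding eigenvector_def using wc trans_mat_carrier by auto
  then have "eigenvalue (trans_mat n P) x" unfolding eigenvalue_def by auto
  then show ?thesis using eigenvalue_root_char_poly[OF trans_mat_carrier] by simp
qed

end



lemma insort_all_less: "(\<forall>y\<in>set xs. y < (x::real)) \<Longrightarrow> insort x xs = xs @ [x]"
  by (induction xs) auto

lemma sorted_le_last: "sorted xs \<Longrightarrow> y \<in> set xs \<Longrightarrow> y \<le> last (xs :: real list)"
proof (induction xs)
  case Nil then show ?case by simp
next
  case (Cons a xs)
  show ?case
  proof (cases "xs = []")
    case True then show ?thesis using Cons by simp
  next
    case False
    then have "last xs \<in> set xs" by simp
    then show ?thesis using Cons False by auto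
  qed
qed

lemma second_of_multiset:
  fixes R :: "real multiset"
  assumes c1: "count R 1 = 1" and le1: "\<forall>x\<in>#R. x \<le> 1" and mu: "mu \<in># R" "mu \<noteq> 1"
  shows "rev (sorted_list_of_multiset R) ! 1 \<ge> mu \<and> rev (sorted_list_of_multiset R) ! 1 < 1"
proof -
  define R' where "R' = R - {#1#}"
  have "1 \<in># R" by (metis c1 count_eq_zero_iff zero_neq_one)
  then have R: "R = add_mset 1 R'" unfolding R'_def by simp
  have c0: "count R' 1 = 0" using c1 R by simp
  have lt: "\<forall>x\<in>#R'. x < 1"
  proof
    fix x assume x: "x \<in># R'"
    then have "x \<noteq> 1" using c0 by (auto simp: count_eq_zero_iff)
    moreover have "x \<le> 1" using le1 x R by auto
    ultimately show "x < 1" by simp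
  qed
  have muR': "mu \<in># R'" using mu R by auto
  define L where "L = sorted_list_of_multiset R'"
  have setL: "set L = set_mset R'" unfolding L_def by simp
  have sL: "sorted L" unfolding L_def by simp
  have Lne: "L \<noteq> []" using muR' setL by auto
  have "sorted_list_of_multiset R = L @ [1]"
    unfolding R L_def by (simp add: insort_all_less lt)
  then have "rev (sorted_list_of_multiset R) ! 1 = last L"
    using Lne by (simp add: hd_rev[symmetric] hd_conv_nth nth_Cons')
  moreover have "mu \<le> last L" using sorted_le_last[OF sL] muR' setL by auto
  moreover have "last L < 1" using lt Lne setL last_in_set by metis
  ultimately show ?thesis by simp
qed

lemma poly_pos_at1:
  fixes p :: "real poly"
  assumes lc: "lead_coeff p > 0" and nr: "\<And>x. x \<ge> 1 \<Longrightarrow> poly p x \<noteq> 0"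
  shows "poly p 1 > 0"
proof (rule ccontr)
  assume "\<not> poly p 1 > 0"
  then have neg: "poly p 1 < 0" using nr[of 1] by simp
  obtain N where N: "\<forall>x\<ge>N. poly p x \<ge> lead_coeff p" using poly_pinfty_gt_lc[OF lc] by auto
  define b where "b = max N 2"
  have "poly p b > 0" using N lc unfolding b_def by (meson max.cobounded1 order_less_le_trans)
  moreover have "1 < b" unfolding b_def by simp
  ultimately obtain x where "1 < x" "x < b" "poly p x = 0"
    using poly_IVT_pos[of 1 b p] neg by auto
  with nr[of x] show False by simp
qed

context rchain begin

lemma erase_no_root:
  assumes a: "a < n" and x: "x \<ge> 1"
  shows "poly (char_poly (mat_erase (trans_mat n P) a a)) x \<noteq> 0"
proof
  let ?E = "mat_erase (trans_mat n P) a a"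
  have EC: "?E \<in> carrier_mat n n" using trans_mat_carrier by simp
  assume "poly (char_poly ?E) x = 0"
  then have "eigenvalue ?E x" using eigenvalue_root_char_poly[OF EC] by simp
  then obtain w where "eigenvector ?E w x" unfolding eigenvalue_def by auto
  then have wc: "w \<in> carrier_vec n" and w0: "w \<noteq> 0\<^sub>v n" and we: "?E *\<^sub>v w = x \<cdot>\<^sub>v w"
    unfolding eigenvector_def using EC by auto
  have Ei: "(?E *\<^sub>v w) $ i = (\<Sum>j<n. (if i = a \<or> j = a then 0 else P i j) * w $ j)" if i: "i < n" for i
    using wc i trans_mat_carrier
    apply (simp add: scalar_prod_def mat_erase_def atLeast0LessThan)
    apply (intro sum.cong)
     apply (auto simp: trans_mat_index)
    done
  have wa: "w $ a = 0"
  proof -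
    have "(?E *\<^sub>v w) $ a = 0" using Ei[OF a] by simp
    moreover have "(?E *\<^sub>v w) $ a = x * w $ a" using we a wc by simp
    ultimately show ?thesis using x by simp
  qed
  have "w $ i = 0" if i: "i < n" for i
  proof (rule no_eig_ge1[of "{a}" x "\<lambda>i. w $ i"])
    show "{a} \<subseteq> {..<n}" "{a} \<noteq> {}" using a by auto
    show "1 \<le> x" by fact
    show "\<And>i. i \<in> {a} \<Longrightarrow> w $ i = 0" using wa by simp
    show "x * w $ j = (\<Sum>l<n. P j l * w $ l)" if j: "j < n" "j \<notin> {a}" for j
    proof -
      have "x * w $ j = (?E *\<^sub>v w) $ j" using we j wc by simp
      also have "\<dots> = (\<Sum>l<n. (if j = a \<or> l = a then 0 else P j l) * w $ l)" using Ei j by simp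
      also have "\<dots> = (\<Sum>l<n. P j l * w $ l)" using j wa by (intro sum.cong) auto
      finally show ?thesis .
    qed
  qed (use i in auto)
  then have "w = 0\<^sub>v n" using wc by (intro eq_vecI) auto
  then show False using w0 by simp
qed

lemma cp_nonzero: "char_poly (trans_mat n P) \<noteq> 0"
  using degree_monic_char_poly[OF trans_mat_carrier] by auto

lemma root1: "poly (char_poly (trans_mat n P)) 1 = 0"
proof -
  have "0 < n" using n2 by simp
  then show ?thesis
    by (rule eig_imp_root[of 0 "\<lambda>_. 1"]) (use P_stoch in \<open>auto simp: sum_distrib_right[symmetric]\<close>)
qed

lemma order_one: "order 1 (char_poly (trans_mat n P)) = 1"
proof -
  let ?cp = "char_poly (trans_mat n P)"
  have pos: "poly (char_poly (mat_erase (trans_mat n P) i i)) 1 > 0" if i: "i < n" for i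
  proof (rule poly_pos_at1)
    have EC: "mat_erase (trans_mat n P) i i \<in> carrier_mat n n" using trans_mat_carrier by simp
    show "lead_coeff (char_poly (mat_erase (trans_mat n P) i i)) > 0"
      using degree_monic_char_poly[OF EC] by simp
    show "\<And>x. 1 \<le> x \<Longrightarrow> poly (char_poly (mat_erase (trans_mat n P) i i)) x \<noteq> 0"
      using erase_no_root[OF i] by simp
  qed
  have "poly (monom 1 1 * pderiv ?cp) 1 = poly (\<Sum>i<n. char_poly (mat_erase (trans_mat n P) i i)) 1"
    using pderiv_char_poly_mat_erase[OF trans_mat_carrier] by simp
  then have "poly (pderiv ?cp) 1 = (\<Sum>i<n. poly (char_poly (mat_erase (trans_mat n P) i i)) 1)"
    by (simp add: poly_monom poly_sum)
  also have "\<dots> > 0"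
  proof -
    have "0 \<in> {..<n}" using n2 by simp
    then have "{..<n} \<noteq> {}" by blast
    then show ?thesis using pos by (intro sum_pos) auto
  qed
  finally have "poly (pderiv ?cp) 1 \<noteq> 0" by simp
  then have "order 1 (pderiv ?cp) = 0" by (simp add: order_root)
  then show ?thesis using order_pderiv[OF cp_nonzero root1] by simp
qed

end



lemma quad_zero:
  fixes a b :: real
  assumes "\<And>t. t * a + t^2 * b \<le> 0"
  shows "a = 0"
proof (rule ccontr)
  assume a: "a \<noteq> 0"
  define d where "d = \<bar>b\<bar> + 1"
  have d: "d > 0" unfolding d_def by simp
  have "(a/d) * a + (a/d)^2 * b \<le> 0" by (rule assms)
  then have "d^2 * ((a/d) * a + (a/d)^2 * b) \<le> 0" by (simp add: mult_nonneg_nonpos)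
  moreover have "d^2 * ((a/d) * a + (a/d)^2 * b) = a^2 * (d + b)"
    using d by (simp add: field_simps power2_eq_square)
  moreover have "a^2 * (d + b) > 0" using a unfolding d_def by (intro mult_pos_pos) auto
  ultimately show False by simp
qed

context rchain begin

definition one :: "nat \<Rightarrow> real" where "one = (\<lambda>_. 1)"

lemma ip_delta: "a < n \<Longrightarrow> ip (\<lambda>i. if i = a then c else 0) g = pi a * c * g a"
  unfolding ip_def
  by (subst sum.cong[OF refl, of _ _ "\<lambda>i. if i = a then pi a * c * g a else 0"]) auto

lemma coord_bound:
  assumes f: "ip f f = 1" and i: "i < n"
  shows "\<bar>f i\<bar> \<le> 1 + (\<Sum>j<n. 1 / pi j)"
proof -
  have "pi i * f i * f i \<le> ip f f"
    unfolding ip_def using i by (intro member_le_sum) (auto simp: mult.assoc less_imp_le pi_pos)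
  then have pf: "pi i * (f i)^2 \<le> 1" using f by (simp add: power2_eq_square mult.assoc)
  have sp: "1 / pi i \<le> (\<Sum>j<n. 1 / pi j)"
    using i by (intro member_le_sum) (auto simp: less_imp_le pi_pos)
  show ?thesis
  proof (cases "\<bar>f i\<bar> \<le> 1")
    case True
    have "0 \<le> (\<Sum>j<n. 1 / pi j)" by (intro sum_nonneg) (auto simp: less_imp_le pi_pos)
    then show ?thesis using True by simp
  next
    case False
    then have "\<bar>f i\<bar> * 1 \<le> \<bar>f i\<bar> * \<bar>f i\<bar>"
      using mult_left_mono[of 1 "\<bar>f i\<bar>" "\<bar>f i\<bar>"] by linarith
    then have "\<bar>f i\<bar> \<le> (f i)^2" by (simp add: power2_eq_square abs_mult_self_eq)
    also have "(f i)^2 \<le> 1 / pi i" using pf pi_pos[OF i] by (simp add: field_simps)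
    finally show ?thesis using sp by simp
  qed
qed

lemma Rayleigh_max:
  "\<exists>f. ip f one = 0 \<and> ip f f = 1 \<and> (\<forall>h. ip h one = 0 \<longrightarrow> ip h (Pv h) \<le> ip f (Pv f) * ip h h)"
proof -
  define C where "C = 1 + (\<Sum>j<n. 1 / pi j)"
  define X where "X = (PiE UNIV (\<lambda>i. if i < n then {-C..C} else {0::real}) :: (nat \<Rightarrow> real) set)"
  define K where "K = X \<inter> ({f. ip f one = 0} \<inter> {f. ip f f = 1})"
  have cc: "\<And>i. continuous_on UNIV (\<lambda>f::nat\<Rightarrow>real. f i)" by simp
  have cX: "compact X"
  proof -
    have "compactin (product_topology (\<lambda>i. euclidean) UNIV) X"
      unfolding X_def compactin_PiE by auto
    then show ?thesis by (simp add: euclidean_product_topology)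
  qed
  have cont1: "continuous_on UNIV (\<lambda>f. ip f one)"
    unfolding ip_def one_def by (intro continuous_intros cc)
  have cont2: "continuous_on UNIV (\<lambda>f. ip f f)"
    unfolding ip_def by (intro continuous_intros cc)
  have cont3: "continuous_on UNIV (\<lambda>f. ip f (Pv f))"
    unfolding ip_def Pv_def by (intro continuous_intros cc)
  have clK: "closed ({f. ip f one = 0} \<inter> {f. ip f f = 1})"
    by (intro closed_Int closed_Collect_eq cont1 cont2 continuous_intros)
  have cK: "compact K" unfolding K_def using cX clK by blast
  have norm_in: "(\<lambda>i. if i < n then h i / sqrt (ip h h) else 0) \<in> K"
    if h1: "ip h one = 0" and hp: "ip h h > 0" for h
  proof -
    define s where "s = sqrt (ip h h)"
    have s: "s > 0" "s^2 = ip h h" unfolding s_def using hp by auto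
    define h' where "h' = (\<lambda>i. if i < n then h i / s else 0)"
    have "ip h' h' = ip (\<lambda>i. (1/s) * h i) (\<lambda>i. (1/s) * h i)"
      unfolding h'_def by (rule ip_cong) auto
    also have "\<dots> = (1/s)^2 * ip h h" by (simp only: ip_scale1 ip_scale2) (simp add: power2_eq_square)
    also have "\<dots> = 1" using s hp by (simp add: field_simps)
    finally have n1: "ip h' h' = 1" .
    have "ip h' one = ip (\<lambda>i. (1/s) * h i) one"
      unfolding h'_def by (rule ip_cong) auto
    also have "\<dots> = 0" using h1 by (simp only: ip_scale1 mult_zero_right)
    finally have n2: "ip h' one = 0" .
    have hb: "\<And>i. i<n \<Longrightarrow> \<bar>h' i\<bar> \<le> C" using coord_bound[OF n1] unfolding C_def by blast
    have h'n: "\<And>i. \<not> i<n \<Longrightarrow> h' i = 0" unfolding h'_def by simp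
    have "h' \<in> X"
      using hb h'n unfolding X_def by (auto simp: PiE_def Pi_def extensional_def abs_le_iff) (smt (verit) hb)
    with n1 n2 show ?thesis unfolding K_def h'_def s_def by auto
  qed
  define h0 where "h0 = (\<lambda>i::nat. (if i = 0 then 1 / pi 0 else 0) - (if i = 1 then 1 / pi 1 else (0::real)))"
  have n01: "0 < n" "1 < n" using n2 by auto
  have "ip h0 one = 0"
    unfolding h0_def using n01 pi_pos[of 0] pi_pos[of 1] by (simp add: ip_diff1 ip_delta one_def)
  moreover have "ip h0 h0 > 0"
    unfolding h0_def using n01 pi_pos[of 0] pi_pos[of 1]
    by (simp add: ip_diff1 ip_delta add_pos_pos)
  ultimately have Kne: "K \<noteq> {}" using norm_in by blast
  obtain f where fK: "f \<in> K" and fmax: "\<forall>y\<in>K. ip y (Pv y) \<le> ip f (Pv f)"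
    using continuous_attains_sup[OF cK Kne continuous_on_subset[OF cont3]] by blast
  have f1: "ip f one = 0" and f2: "ip f f = 1" using fK unfolding K_def by auto
  have "ip h (Pv h) \<le> ip f (Pv f) * ip h h" if h1: "ip h one = 0" for h
  proof (cases "ip h h = 0")
    case True
    then have "\<And>i. i < n \<Longrightarrow> h i = 0" using ip_zero by blast
    then have "ip h (Pv h) = ip (\<lambda>_. 0) (Pv h)" by (intro ip_cong) auto
    then show ?thesis using True by (simp add: ip_def)
  next
    case False
    then have hp: "ip h h > 0" using ip_nonneg[of h] by simp
    define s where "s = sqrt (ip h h)"
    have s: "s > 0" "s^2 = ip h h" unfolding s_def using hp by auto
    define h' where "h' = (\<lambda>i. if i < n then h i / sqrt (ip h h) else 0)"
    have "h' \<in> K" unfolding h'_def by (rule norm_in[OF h1 hp])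
    then have le: "ip h' (Pv h') \<le> ip f (Pv f)" using fmax by blast
    have Ph': "Pv h' = Pv (\<lambda>i. (1/s) * h i)" unfolding h'_def s_def by (rule Pv_cong) auto
    have "ip h' (Pv h') = ip (\<lambda>i. (1/s) * h i) (\<lambda>i. (1/s) * Pv h i)"
      unfolding Ph' Pv_scale unfolding h'_def s_def by (rule ip_cong) auto
    also have "\<dots> = ip h (Pv h) / s^2" by (simp only: ip_scale1 ip_scale2) (simp add: power2_eq_square)
    finally have "ip h (Pv h) / s^2 \<le> ip f (Pv f)" using le by simp
    then show ?thesis using s hp by (simp add: field_simps)
  qed
  with f1 f2 show ?thesis by blast
qed

lemma exists_mu:
  "\<exists>mu. mu \<ge> -1 \<and> mu < 1 \<and> poly (char_poly (trans_mat n P)) mu = 0 \<and>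
     (\<forall>h. ip h one = 0 \<longrightarrow> ip h (Pv h) \<le> mu * ip h h)"
proof -
  obtain f where f1: "ip f one = 0" and f2: "ip f f = 1"
    and fmax: "\<And>h. ip h one = 0 \<Longrightarrow> ip h (Pv h) \<le> ip f (Pv f) * ip h h"
    using Rayleigh_max by blast
  define mu where "mu = ip f (Pv f)"
  have sym: "ip f (Pv g) = ip g (Pv f)" for g
    using ip_Pv_sym[of f g] ip_comm by simp
  have key: "ip g (Pv f) = mu * ip g f" if g1: "ip g one = 0" for g
  proof -
    have "t * (2 * (ip g (Pv f) - mu * ip g f)) + t^2 * (ip g (Pv g) - mu * ip g g) \<le> 0" for t
    proof -
      define h where "h = (\<lambda>i. f i + t * g i)"
      have h1: "ip h one = 0" unfolding h_def using f1 g1 by (simp add: ip_add1 ip_scale1)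
      have "ip h (Pv h) = ip f (Pv f) + t * ip f (Pv g) + t * ip g (Pv f) + t^2 * ip g (Pv g)"
        unfolding h_def Pv_add Pv_scale
        by (simp add: ip_add1 ip_add2 ip_scale1 ip_scale2 power2_eq_square algebra_simps)
      then have "ip h (Pv h) = ip f (Pv f) + 2 * t * ip g (Pv f) + t^2 * ip g (Pv g)"
        using sym[of g] by simp
      moreover have "ip h h = ip f f + 2 * t * ip g f + t^2 * ip g g"
        unfolding h_def
        by (simp add: ip_add1 ip_add2 ip_scale1 ip_scale2 power2_eq_square algebra_simps ip_comm[of f g])
      moreover have "ip h (Pv h) \<le> mu * ip h h" using fmax[OF h1] unfolding mu_def by simp
      ultimately show ?thesis using f2 unfolding mu_def by (simp add: algebra_simps)
    qed
    then have "2 * (ip g (Pv f) - mu * ip g f) = 0" by (rule quad_zero)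
    then show ?thesis by simp
  qed
  define r where "r = (\<lambda>i. Pv f i - mu * f i)"
  have Pone: "ip f (Pv one) = ip f one"
    by (rule ip_cong) (auto simp: one_def Pv_const)
  have r1: "ip r one = 0"
    unfolding r_def using f1 Pone ip_Pv_sym[of f one] ip_comm
    by (simp add: ip_diff1 ip_scale1)
  have "ip r r = ip r (Pv f) - mu * ip r f"
    unfolding r_def by (simp add: ip_diff2 ip_scale2)
  also have "\<dots> = 0" using key[OF r1] by simp
  finally have rr: "ip r r = 0" .
  have eig: "mu * f i = (\<Sum>j<n. P i j * f j)" if i: "i < n" for i
    using ip_zero[OF rr i] unfolding r_def Pv_def by simp
  obtain i0 where i0: "i0 < n" "f i0 \<noteq> 0"
  proof (rule ccontr)
    assume "\<not> thesis"
    then have "\<And>i. i < n \<Longrightarrow> f i = 0" using that by blast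
    then have "ip f f = 0" unfolding ip_def by simp
    then show False using f2 by simp
  qed
  have root: "poly (char_poly (trans_mat n P)) mu = 0" by (rule eig_imp_root[OF i0 eig])
  have ge: "mu \<ge> -1" using ip_Pv_lower[of f] f2 unfolding mu_def by simp
  have lt: "mu < 1"
  proof (rule ccontr)
    assume "\<not> mu < 1"
    moreover have "mu \<le> 1" by (rule eig_le1[OF i0 eig])
    ultimately have m1: "mu = 1" by simp
    have v0: "f i - f 0 = 0" if i: "i < n" for i
    proof (rule no_eig_ge1[of "{0}" 1 "\<lambda>i. f i - f 0"])
      show "{0} \<subseteq> {..<n}" "{0} \<noteq> {}" using n2 by auto
      show "1 \<le> (1::real)" by simp
      show "\<And>i. i \<in> {0} \<Longrightarrow> f i - f 0 = 0" by simp
      show "1 * (f j - f 0) = (\<Sum>l<n. P j l * (f l - f 0))" if j: "j < n" "j \<notin> {0}" for j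
      proof -
        have a: "(\<Sum>l<n. P j l * f 0) = f 0" using P_stoch[OF j(1)] by (simp add: sum_distrib_right[symmetric])
        have b: "(\<Sum>l<n. P j l * f l) = f j" using eig[OF j(1)] m1 by simp
        have "(\<Sum>l<n. P j l * (f l - f 0)) = (\<Sum>l<n. P j l * f l) - (\<Sum>l<n. P j l * f 0)"
          by (simp add: right_diff_distrib sum_subtractf)
        then show ?thesis using a b by simp
      qed
    qed (use i in auto)
    have v0': "f i = f 0" if "i < n" for i using v0[OF that] by (metis eq_iff_diff_eq_0)
    have "ip f one = ip (\<lambda>_. f 0) one"
    proof (rule ip_cong)
      fix i assume "i < n" then show "f i = f 0" by (rule v0')
    qed simp
    also have "\<dots> = f 0" unfolding ip_def one_def using pi_sum by (simp add: sum_distrib_right[symmetric])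
    finally have "f 0 = 0" using f1 by simp
    then have "\<And>i. i < n \<Longrightarrow> f i = 0" using v0' by metis
    then have "ip f f = 0" unfolding ip_def by simp
    then show False using f2 by simp
  qed
  have bound: "\<forall>h. ip h one = 0 \<longrightarrow> ip h (Pv h) \<le> mu * ip h h" using fmax unfolding mu_def by blast
  show ?thesis using ge lt root bound by blast
qed

lemma lambda2_bounds:
  "\<exists>mu. mu \<ge> -1 \<and> mu \<le> lambda2 n P \<and> lambda2 n P < 1 \<and>
     (\<forall>h. ip h one = 0 \<longrightarrow> ip h (Pv h) \<le> mu * ip h h)"
proof -
  obtain mu where mu: "mu \<ge> -1" "mu < 1" "poly (char_poly (trans_mat n P)) mu = 0"
    and bd: "\<forall>h. ip h one = 0 \<longrightarrow> ip h (Pv h) \<le> mu * ip h h"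
    using exists_mu by blast
  let ?cp = "char_poly (trans_mat n P)"
  have c1: "count (proots ?cp) 1 = 1" using order_one cp_nonzero by simp
  have le1: "\<forall>x\<in>#proots ?cp. x \<le> 1"
  proof
    fix x assume "x \<in># proots ?cp"
    then have "poly ?cp x = 0" using cp_nonzero by simp
    then obtain v where "\<exists>i<n. v i \<noteq> 0" "\<forall>i<n. x * v i = (\<Sum>j<n. P i j * v j)"
      using root_imp_eig by blast
    then show "x \<le> 1" using eig_le1 by blast
  qed
  have muin: "mu \<in># proots ?cp" using mu(3) cp_nonzero by simp
  have "lambda2 n P \<ge> mu \<and> lambda2 n P < 1"
    unfolding lambda2_def eigenvalues_desc_def
    by (rule second_of_multiset[OF c1 le1 muin]) (use mu in simp)
  then show ?thesis using mu bd by blast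
qed

end



locale hchain = rchain +
  fixes A :: "nat set" and eps :: real
  assumes A_sub: "A \<subseteq> {..<n}" and eps_pos: "0 < eps" and eps_lt1: "eps < 1"
    and A_big: "(\<Sum>x\<in>A. pi x) \<ge> 1 - eps"
begin

lemma A_ne: "A \<noteq> {}"
  using A_big eps_lt1 by auto

definition Mx :: "real mat" where
  "Mx = mat n n (\<lambda>(i,j). (if i = j then 1 else 0) - (if i \<notin> A \<and> j \<notin> A then P i j else 0))"

lemma Mx_carrier: "Mx \<in> carrier_mat n n" unfolding Mx_def by simp

lemma Mx_mult:
  assumes v: "v \<in> carrier_vec n" and i: "i < n"
  shows "(Mx *\<^sub>v v) $ i = v $ i - (\<Sum>j<n. (if i \<notin> A \<and> j \<notin> A then P i j else 0) * v $ j)"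
proof -
  have "(Mx *\<^sub>v v) $ i = (\<Sum>j<n. ((if i = j then 1 else 0) - (if i \<notin> A \<and> j \<notin> A then P i j else 0)) * v $ j)"
    using v i Mx_carrier by (simp add: scalar_prod_def Mx_def atLeast0LessThan)
  also have "\<dots> = (\<Sum>j<n. (if i = j then 1 else 0) * v $ j) - (\<Sum>j<n. (if i \<notin> A \<and> j \<notin> A then P i j else 0) * v $ j)"
    by (simp add: left_diff_distrib sum_subtractf)
  also have "(\<Sum>j<n. (if i = j then 1 else 0) * v $ j) = v $ i"
    using i by (subst sum.cong[OF refl, of _ _ "\<lambda>j. if i = j then v $ j else 0"]) auto
  finally show ?thesis .
qed

lemma Mx_det: "det Mx \<noteq> 0"
proof
  assume "det Mx = 0"
  then obtain v where vc: "v \<in> carrier_vec n" and v0: "v \<noteq> 0\<^sub>v n" and mv: "Mx *\<^sub>v v = 0\<^sub>v n"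
    using det_0_iff_vec_prod_zero_field[OF Mx_carrier] by auto
  have eq: "v $ i = (\<Sum>j<n. (if i \<notin> A \<and> j \<notin> A then P i j else 0) * v $ j)" if i: "i < n" for i
  proof -
    have "(Mx *\<^sub>v v) $ i = 0" using mv i by simp
    then show ?thesis using Mx_mult[OF vc i] by simp
  qed
  have vA: "v $ i = 0" if "i \<in> A" for i
    using eq[of i] that A_sub by auto
  have "v $ i = 0" if i: "i < n" for i
  proof (rule no_eig_ge1[of A 1 "\<lambda>i. v $ i"])
    show "A \<subseteq> {..<n}" "A \<noteq> {}" using A_sub A_ne by auto
    show "1 \<le> (1::real)" by simp
    show "\<And>i. i \<in> A \<Longrightarrow> v $ i = 0" by (rule vA)
    show "1 * v $ j = (\<Sum>l<n. P j l * v $ l)" if j: "j < n" "j \<notin> A" for j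
    proof -
      have "v $ j = (\<Sum>l<n. (if j \<notin> A \<and> l \<notin> A then P j l else 0) * v $ l)" by (rule eq[OF j(1)])
      also have "\<dots> = (\<Sum>l<n. P j l * v $ l)" using j vA by (intro sum.cong) auto
      finally show ?thesis by simp
    qed
  qed (use i in auto)
  then have "v = 0\<^sub>v n" using vc by (intro eq_vecI) auto
  then show False using v0 by simp
qed

lemma exists_g:
  "\<exists>g. (\<forall>i. (n \<le> i \<or> i \<in> A) \<longrightarrow> g i = 0) \<and> (\<forall>i<n. i \<notin> A \<longrightarrow> g i = 1 + (\<Sum>j<n. P i j * g j))"
proof -
  have "Mx \<in> Units (ring_mat TYPE(real) n ())"
    by (rule det_non_zero_imp_unit[OF Mx_carrier Mx_det])
  then obtain B where Bc: "B \<in> carrier_mat n n" and MB: "Mx * B = 1\<^sub>m n"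
    unfolding Units_def by (auto simp: ring_mat_simps)
  define b where "b = vec n (\<lambda>i. if i \<notin> A then 1 else (0::real))"
  define gv where "gv = B *\<^sub>v b"
  have gvc: "gv \<in> carrier_vec n" unfolding gv_def b_def using Bc by simp
  have bc: "b \<in> carrier_vec n" unfolding b_def by simp
  have "Mx *\<^sub>v gv = (Mx * B) *\<^sub>v b"
    unfolding gv_def by (rule assoc_mult_mat_vec[symmetric, OF Mx_carrier Bc bc])
  also have "\<dots> = b" using MB bc by simp
  finally have Mgb: "Mx *\<^sub>v gv = b" .
  have eq: "gv $ i - (\<Sum>j<n. (if i \<notin> A \<and> j \<notin> A then P i j else 0) * gv $ j) = (if i \<notin> A then 1 else 0)"
    if i: "i < n" for i
  proof -
    have "(Mx *\<^sub>v gv) $ i = b $ i" using Mgb by simp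
    then show ?thesis using Mx_mult[OF gvc i] i unfolding b_def by simp
  qed
  define g where "g = (\<lambda>i. if i < n \<and> i \<notin> A then gv $ i else 0)"
  have gA: "\<forall>i. (n \<le> i \<or> i \<in> A) \<longrightarrow> g i = 0" unfolding g_def by auto
  have "g i = 1 + (\<Sum>j<n. P i j * g j)" if i: "i < n" "i \<notin> A" for i
  proof -
    have "gv $ i = 1 + (\<Sum>j<n. (if i \<notin> A \<and> j \<notin> A then P i j else 0) * gv $ j)"
      using eq[OF i(1)] i by simp
    also have "(\<Sum>j<n. (if i \<notin> A \<and> j \<notin> A then P i j else 0) * gv $ j) = (\<Sum>j<n. P i j * g j)"
      using i unfolding g_def by (intro sum.cong) auto
    finally show ?thesis unfolding g_def using i by simp
  qed
  with gA show ?thesis by blast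
qed

lemma g_nonneg:
  assumes gA: "\<And>i. (n \<le> i \<or> i \<in> A) \<Longrightarrow> g i = 0"
    and ge: "\<And>i. i < n \<Longrightarrow> i \<notin> A \<Longrightarrow> g i = 1 + (\<Sum>j<n. P i j * g j)"
    and i: "i < n"
  shows "g i \<ge> 0"
proof (rule ccontr)
  assume "\<not> g i \<ge> 0"
  define m where "m = Min (g ` {..<n})"
  have mle: "\<And>l. l < n \<Longrightarrow> m \<le> g l" unfolding m_def by (intro Min_le) auto
  have "m \<in> g ` {..<n}" unfolding m_def using i by (intro Min_in) auto
  then obtain j where j: "j < n" "g j = m" by auto
  have mneg: "m < 0" using mle[OF i] \<open>\<not> g i \<ge> 0\<close> by simp
  have jA: "j \<notin> A" using gA j mneg by force
  have "(\<Sum>l<n. P j l * m) \<le> (\<Sum>l<n. P j l * g l)"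
    using P_nonneg j mle by (intro sum_mono mult_left_mono) auto
  moreover have "(\<Sum>l<n. P j l * m) = m" using P_stoch[OF j(1)] by (simp add: sum_distrib_right[symmetric])
  ultimately have "g j \<ge> 1 + m" using ge[OF j(1) jA] by simp
  then show False using j by simp
qed

lemma avoid_nonneg: "z < n \<Longrightarrow> avoid n P A j z \<ge> 0"
proof (induction j arbitrary: z)
  case 0 then show ?case by simp
next
  case (Suc j) then show ?case using P_nonneg by (auto intro!: sum_nonneg mult_nonneg_nonneg)
qed

lemma avoid_A: "z \<in> A \<Longrightarrow> avoid n P A j z = 0"
  by (cases j) auto

lemma avoid_partial:
  assumes gA: "\<And>i. (n \<le> i \<or> i \<in> A) \<Longrightarrow> g i = 0"
    and ge: "\<And>i. i < n \<Longrightarrow> i \<notin> A \<Longrightarrow> g i = 1 + (\<Sum>j<n. P i j * g j)"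
  shows "z < n \<Longrightarrow> (\<Sum>j<N. avoid n P A j z) \<le> g z"
proof (induction N arbitrary: z)
  case 0
  then show ?case using g_nonneg[OF gA ge] by simp
next
  case (Suc N)
  show ?case
  proof (cases "z \<in> A")
    case True
    then show ?thesis using gA[of z] by (simp add: avoid_A)
  next
    case False
    have "(\<Sum>j<Suc N. avoid n P A j z) = 1 + (\<Sum>j<N. \<Sum>y<n. P z y * avoid n P A j y)"
      using False by (subst sum.lessThan_Suc_shift) simp
    also have "\<dots> = 1 + (\<Sum>y<n. P z y * (\<Sum>j<N. avoid n P A j y))"
      by (subst sum.swap) (simp add: sum_distrib_left)
    also have "\<dots> \<le> 1 + (\<Sum>y<n. P z y * g y)"
      using Suc P_nonneg by (intro add_left_mono sum_mono mult_left_mono) auto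
    also have "\<dots> = g z" using ge[OF Suc.prems False] by simp
    finally show ?thesis .
  qed
qed

lemma exp_hit_eq:
  assumes z: "z < n"
  shows "exp_hit n P A z = (\<Sum>j. ennreal (avoid n P A j z))"
proof -
  have int1: "(\<integral>\<^sup>+ t. ennreal (exp (-t) * t ^ j / fact j * avoid n P A j z) * indicator {0..} t \<partial>lborel)
      = ennreal (avoid n P A j z)" for j
  proof -
    have a0: "avoid n P A j z \<ge> 0" using avoid_nonneg[OF z] .
    have "(\<integral>\<^sup>+ t. ennreal (exp (-t) * t ^ j / fact j * avoid n P A j z) * indicator {0..} t \<partial>lborel)
        = (\<integral>\<^sup>+ t. ennreal (avoid n P A j z) * ennreal (erlang_density j 1 t * t ^ 0) \<partial>lborel)"
    proof (intro nn_integral_cong)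
      fix t :: real
      show "ennreal (exp (-t) * t ^ j / fact j * avoid n P A j z) * indicator {0..} t
          = ennreal (avoid n P A j z) * ennreal (erlang_density j 1 t * t ^ 0)"
      proof (cases "t < 0")
        case True then show ?thesis by (simp add: erlang_density_def indicator_def)
      next
        case False
        then have "exp (-t) * t ^ j / fact j * avoid n P A j z = avoid n P A j z * (erlang_density j 1 t * t ^ 0)"
          by (simp add: erlang_density_def field_simps)
        then show ?thesis using False a0
          by (simp add: indicator_def ennreal_mult'[symmetric])
      qed
    qed
    also have "\<dots> = ennreal (avoid n P A j z) * (\<integral>\<^sup>+ t. ennreal (erlang_density j 1 t * t ^ 0) \<partial>lborel)"
      by (rule nn_integral_cmult) measurable
    also have "(\<integral>\<^sup>+ t. ennreal (erlang_density j 1 t * t ^ 0) \<partial>lborel) = 1"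
      using nn_integral_erlang_ith_moment[of 1 j 0] by simp
    finally show ?thesis by simp
  qed
  have "exp_hit n P A z = (\<integral>\<^sup>+ t. (\<Sum>j. ennreal (exp (-t) * t ^ j / fact j * avoid n P A j z) * indicator {0..} t) \<partial>lborel)"
    unfolding exp_hit_def survival_def by simp
  also have "\<dots> = (\<Sum>j. \<integral>\<^sup>+ t. ennreal (exp (-t) * t ^ j / fact j * avoid n P A j z) * indicator {0..} t \<partial>lborel)"
    by (rule nn_integral_suminf) measurable
  also have "\<dots> = (\<Sum>j. ennreal (avoid n P A j z))" using int1 by simp
  finally show ?thesis .
qed

lemma exp_hit_le_g:
  assumes gA: "\<And>i. (n \<le> i \<or> i \<in> A) \<Longrightarrow> g i = 0"
    and ge: "\<And>i. i < n \<Longrightarrow> i \<notin> A \<Longrightarrow> g i = 1 + (\<Sum>j<n. P i j * g j)"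
    and z: "z < n"
  shows "exp_hit n P A z \<le> ennreal (g z)"
proof -
  have "(\<Sum>j. ennreal (avoid n P A j z)) = (SUP N. \<Sum>j<N. ennreal (avoid n P A j z))"
    by (rule suminf_eq_SUP)
  also have "\<dots> \<le> ennreal (g z)"
  proof (rule SUP_least)
    fix N
    have "(\<Sum>j<N. ennreal (avoid n P A j z)) = ennreal (\<Sum>j<N. avoid n P A j z)"
      using avoid_nonneg[OF z] by simp
    also have "\<dots> \<le> ennreal (g z)" by (rule ennreal_leI[OF avoid_partial[OF gA ge z]])
    finally show "(\<Sum>j<N. ennreal (avoid n P A j z)) \<le> ennreal (g z)" .
  qed
  finally show ?thesis using exp_hit_eq[OF z] by simp
qed

end



lemma wcs:
  fixes w f :: "nat \<Rightarrow> real"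
  assumes "\<And>i. i \<in> S \<Longrightarrow> w i \<ge> 0"
  shows "(\<Sum>i\<in>S. w i * f i)^2 \<le> (\<Sum>i\<in>S. w i) * (\<Sum>i\<in>S. w i * (f i)^2)"
proof -
  have "(\<Sum>i\<in>S. sqrt (w i) * (sqrt (w i) * f i))^2 \<le> (\<Sum>i\<in>S. (sqrt (w i))^2) * (\<Sum>i\<in>S. (sqrt (w i) * f i)^2)"
    by (rule Cauchy_Schwarz_ineq_sum)
  moreover have "(\<Sum>i\<in>S. sqrt (w i) * (sqrt (w i) * f i)) = (\<Sum>i\<in>S. w i * f i)"
    using assms by (intro sum.cong) (auto simp: mult.assoc[symmetric])
  moreover have "(\<Sum>i\<in>S. (sqrt (w i))^2) = (\<Sum>i\<in>S. w i)"
    using assms by (intro sum.cong) auto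
  moreover have "(\<Sum>i\<in>S. (sqrt (w i) * f i)^2) = (\<Sum>i\<in>S. w i * (f i)^2)"
    using assms by (intro sum.cong) (auto simp: power_mult_distrib)
  ultimately show ?thesis by simp
qed

lemma quad_disc:
  fixes a b c :: real
  assumes q: "\<And>t. 0 \<le> a + 2 * t * b + t^2 * c" and c: "c \<ge> 0"
  shows "b^2 \<le> a * c"
proof (cases "c = 0")
  case True
  have a: "a \<ge> 0" using q[of 0] by simp
  have "b = 0"
  proof (rule ccontr)
    assume b: "b \<noteq> 0"
    have "0 \<le> a + 2 * (-(a+1)/(2*b)) * b + (-(a+1)/(2*b))^2 * c" by (rule q)
    also have "\<dots> = -1" using b True by (simp add: field_simps)
    finally show False by simp
  qed
  then show ?thesis using a True by simp
next
  case False
  then have cp: "c > 0" using c by simp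
  have "0 \<le> a + 2 * (-b/c) * b + (-b/c)^2 * c" by (rule q)
  also have "\<dots> = a - b^2 / c" using cp by (simp add: field_simps power2_eq_square)
  finally have "b^2 / c \<le> a" by simp
  then show ?thesis using cp by (simp add: field_simps mult.commute)
qed

context hchain begin

definition inB :: "nat \<Rightarrow> bool" where "inB i \<longleftrightarrow> i < n \<and> i \<notin> A"
definition VB :: "(nat \<Rightarrow> real) \<Rightarrow> bool" where "VB f \<longleftrightarrow> (\<forall>i. \<not> inB i \<longrightarrow> f i = 0)"
definition Lz :: "(nat \<Rightarrow> real) \<Rightarrow> nat \<Rightarrow> real" where
  "Lz f = (\<lambda>i. if inB i then (f i + Pv f i) / 2 else 0)"
definition gam :: real where "gam = (1 - lambda2 n P) * (1 - eps)"

lemma lam_facts: "lambda2 n P < 1" "lambda2 n P \<ge> -1"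
  using lambda2_bounds by force+

lemma gam_pos: "gam > 0" unfolding gam_def using lam_facts eps_lt1 by simp

lemma gam_le2: "gam \<le> 2"
proof -
  have "1 - lambda2 n P \<le> 2" using lam_facts by simp
  moreover have "1 - eps \<le> 1" "0 \<le> 1 - eps" using eps_pos eps_lt1 by auto
  ultimately have "(1 - lambda2 n P) * (1 - eps) \<le> 2 * 1"
    using lam_facts by (intro mult_mono) auto
  then show ?thesis unfolding gam_def by simp
qed

lemma piB: "(\<Sum>i\<in>{..<n} - A. pi i) \<le> eps"
proof -
  have "(\<Sum>i\<in>{..<n} - A. pi i) = (\<Sum>i<n. pi i) - (\<Sum>i\<in>A. pi i)"
    using A_sub by (simp add: sum_diff)
  then show ?thesis using pi_sum A_big by simp
qed

lemma sum_VB: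
  assumes "\<And>i. i < n \<Longrightarrow> i \<in> A \<Longrightarrow> F i = 0"
  shows "(\<Sum>i<n. F i) = (\<Sum>i\<in>{..<n} - A. F i)"
  by (rule sum.mono_neutral_right) (use assms in auto)

lemma cB:
  assumes f: "VB f"
  shows "(ip f one)^2 \<le> eps * ip f f"
proof -
  have f0: "\<And>i. i < n \<Longrightarrow> i \<in> A \<Longrightarrow> f i = 0" using f unfolding VB_def inB_def by auto
  have e1: "ip f one = (\<Sum>i\<in>{..<n} - A. pi i * f i)"
    unfolding ip_def one_def by (subst sum_VB) (auto simp: f0)
  have e2: "ip f f = (\<Sum>i\<in>{..<n} - A. pi i * (f i)^2)"
    unfolding ip_def by (subst sum_VB) (auto simp: f0 power2_eq_square mult.assoc)
  have "(ip f one)^2 \<le> (\<Sum>i\<in>{..<n} - A. pi i) * (\<Sum>i\<in>{..<n} - A. pi i * (f i)^2)"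
    unfolding e1 by (rule wcs) (auto intro: less_imp_le pi_pos)
  also have "\<dots> \<le> eps * (\<Sum>i\<in>{..<n} - A. pi i * (f i)^2)"
    using piB by (intro mult_right_mono sum_nonneg) (auto intro!: mult_nonneg_nonneg simp: less_imp_le pi_pos)
  finally show ?thesis using e2 by simp
qed

lemma gap:
  assumes f: "VB f"
  shows "ip f (Pv f) \<le> (1 - gam) * ip f f"
proof -
  obtain mu where mu: "mu \<ge> -1" "mu \<le> lambda2 n P" "lambda2 n P < 1"
    and bd: "\<And>h. ip h one = 0 \<Longrightarrow> ip h (Pv h) \<le> mu * ip h h"
    using lambda2_bounds by blast
  define c where "c = ip f one"
  define h where "h = (\<lambda>i. f i - c * one i)"
  have oo: "ip one one = 1" using ip_one unfolding one_def .
  have h1: "ip h one = 0" unfolding h_def c_def by (simp add: ip_diff1 ip_scale1 oo)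
  have fh: "f = (\<lambda>i. h i + c * one i)" unfolding h_def by simp
  have Pone: "\<And>i. i < n \<Longrightarrow> Pv one i = one i" unfolding one_def using Pv_const by simp
  have ho: "ip one (Pv h) = 0"
  proof -
    have "ip one (Pv h) = ip (Pv one) h" by (rule ip_Pv_sym)
    also have "\<dots> = ip one h" by (rule ip_cong) (auto simp: Pone)
    also have "\<dots> = 0" using h1 ip_comm by simp
    finally show ?thesis .
  qed
  have P1: "ip f (Pv f) = ip h (Pv h) + c^2"
  proof -
    have "ip f (Pv f) = ip (\<lambda>i. h i + c * one i) (Pv (\<lambda>i. h i + c * one i))"
      by (simp only: fh[symmetric])
    also have "\<dots> = ip (\<lambda>i. h i + c * one i) (\<lambda>i. Pv h i + c * Pv one i)"
      by (simp only: Pv_add Pv_scale)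
    also have "\<dots> = ip h (Pv h) + c * ip h (Pv one) + c * ip one (Pv h) + c * c * ip one (Pv one)"
      by (simp add: ip_add1 ip_add2 ip_scale1 ip_scale2 algebra_simps)
    also have "ip h (Pv one) = ip h one" by (rule ip_cong) (auto simp: Pone)
    also have "ip one (Pv one) = ip one one" by (rule ip_cong) (auto simp: Pone)
    finally show ?thesis using h1 ho oo by (simp add: power2_eq_square)
  qed
  have P2: "ip f f = ip h h + c^2"
  proof -
    have "ip f f = ip (\<lambda>i. h i + c * one i) (\<lambda>i. h i + c * one i)" by (simp only: fh[symmetric])
    also have "\<dots> = ip h h + c * ip h one + c * ip one h + c * c * ip one one"
      by (simp add: ip_add1 ip_add2 ip_scale1 ip_scale2 algebra_simps)
    finally show ?thesis using h1 oo ip_comm[of one h] by (simp add: power2_eq_square)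
  qed
  have F0: "ip f f \<ge> 0" by (rule ip_nonneg)
  have c2: "c^2 \<le> eps * ip f f" unfolding c_def by (rule cB[OF f])
  have "ip f (Pv f) \<le> mu * (ip f f - c^2) + c^2" using bd[OF h1] P1 P2 by simp
  also have "\<dots> = mu * ip f f + (1 - mu) * c^2" by (simp add: algebra_simps)
  also have "\<dots> \<le> mu * ip f f + (1 - mu) * (eps * ip f f)"
    using c2 mu by (intro add_left_mono mult_left_mono) auto
  also have "\<dots> \<le> (1 - gam) * ip f f"
  proof -
    have "(1 - gam) * ip f f - (mu * ip f f + (1 - mu) * (eps * ip f f)) = ((1 - eps) * (lambda2 n P - mu)) * ip f f"
      unfolding gam_def by (simp add: algebra_simps)
    also have "\<dots> \<ge> 0" using eps_lt1 mu F0 by (intro mult_nonneg_nonneg) auto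
    finally show ?thesis by simp
  qed
  finally show ?thesis .
qed

lemma ipLz:
  assumes f: "VB f"
  shows "ip f (Lz g) = (ip f g + ip f (Pv g)) / 2"
proof -
  have "ip f (Lz g) = (\<Sum>i<n. pi i * f i * ((g i + Pv g i) / 2))"
    unfolding ip_def Lz_def using f unfolding VB_def by (intro sum.cong) auto
  also have "\<dots> = (\<Sum>i<n. pi i * f i * g i + pi i * f i * Pv g i) / 2"
    by (simp add: sum_divide_distrib algebra_simps)
  also have "\<dots> = (ip f g + ip f (Pv g)) / 2" unfolding ip_def by (simp add: sum.distrib)
  finally show ?thesis .
qed

lemma Lz_sym:
  assumes "VB f" "VB g"
  shows "ip f (Lz g) = ip (Lz f) g"
proof -
  have "ip f (Lz g) = (ip f g + ip f (Pv g)) / 2" by (rule ipLz[OF assms(1)])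
  also have "ip f (Pv g) = ip g (Pv f)" using ip_Pv_sym[of f g] ip_comm by simp
  also have "(ip f g + ip g (Pv f)) / 2 = ip g (Lz f)" using ipLz[OF assms(2)] ip_comm[of f g] by simp
  finally show ?thesis using ip_comm by simp
qed

lemma VB_Lz: "VB (Lz f)" unfolding VB_def Lz_def by auto

lemma VB_lin: "VB f \<Longrightarrow> VB g \<Longrightarrow> VB (\<lambda>i. a * f i + b * g i)" unfolding VB_def by auto

lemma Lz_lin: "Lz (\<lambda>i. a * f i + b * g i) = (\<lambda>i. a * Lz f i + b * Lz g i)"
  unfolding Lz_def by (auto simp: Pv_add Pv_scale field_simps)

lemma Lz_iter_lin: "(Lz ^^ M) (\<lambda>i. a * f i + b * g i) = (\<lambda>i. a * (Lz ^^ M) f i + b * (Lz ^^ M) g i)"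
  by (induction M) (auto simp: Lz_lin)

lemma VB_iter: "VB f \<Longrightarrow> VB ((Lz ^^ M) f)"
  by (induction M) (auto simp: VB_Lz)

lemma Lz_form:
  assumes f: "VB f"
  shows "0 \<le> ip f (Lz f)" "ip f (Lz f) \<le> (1 - gam/2) * ip f f"
proof -
  have e: "ip f (Lz f) = (ip f f + ip f (Pv f)) / 2" by (rule ipLz[OF f])
  show "0 \<le> ip f (Lz f)" using e ip_Pv_lower[of f] by simp
  show "ip f (Lz f) \<le> (1 - gam/2) * ip f f" using e gap[OF f] by (simp add: algebra_simps)
qed

lemma CS_form:
  assumes x: "VB x" and y: "VB y"
  shows "(ip x (Lz y))^2 \<le> ip x (Lz x) * ip y (Lz y)"
proof (rule quad_disc)
  show "0 \<le> ip y (Lz y)" by (rule Lz_form(1)[OF y])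
  fix t
  define z where "z = (\<lambda>i. 1 * x i + t * y i)"
  have zV: "VB z" unfolding z_def by (rule VB_lin[OF x y])
  have sy: "ip y (Lz x) = ip x (Lz y)" using Lz_sym[OF x y] ip_comm by simp
  have "ip z (Lz z) = ip x (Lz x) + 2 * t * ip x (Lz y) + t^2 * ip y (Lz y)"
    unfolding z_def Lz_lin
    by (simp add: ip_add1 ip_add2 ip_scale1 ip_scale2 sy power2_eq_square algebra_simps)
  moreover have "0 \<le> ip z (Lz z)" by (rule Lz_form(1)[OF zV])
  ultimately show "0 \<le> ip x (Lz x) + 2 * t * ip x (Lz y) + t^2 * ip y (Lz y)" by simp
qed

lemma Lz_norm:
  assumes f: "VB f"
  shows "ip (Lz f) (Lz f) \<le> (1 - gam/2)^2 * ip f f"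
proof -
  define y where "y = Lz f"
  define c where "c = 1 - gam/2"
  have c0: "c \<ge> 0" unfolding c_def using gam_le2 by simp
  have yV: "VB y" unfolding y_def by (rule VB_Lz)
  have Y: "ip y y = ip f (Lz y)" using Lz_sym[OF f yV] unfolding y_def by simp
  have "(ip y y)^2 \<le> ip f (Lz f) * ip y (Lz y)" unfolding Y by (rule CS_form[OF f yV])
  also have "\<dots> \<le> (c * ip f f) * (c * ip y y)"
    using Lz_form[OF f] Lz_form[OF yV] unfolding c_def by (intro mult_mono) auto
  finally have le: "(ip y y)^2 \<le> c^2 * ip f f * ip y y" by (simp add: power2_eq_square algebra_simps)
  show ?thesis
  proof (cases "ip y y = 0")
    case True then show ?thesis using ip_nonneg[of f] unfolding y_def by simp
  next
    case False
    then have "ip y y > 0" using ip_nonneg[of y] by simp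
    then have "ip y y \<le> c^2 * ip f f" using le by (simp add: power2_eq_square)
    then show ?thesis unfolding y_def c_def .
  qed
qed

lemma Lz_iter_norm:
  assumes f: "VB f"
  shows "ip ((Lz ^^ M) f) ((Lz ^^ M) f) \<le> ((1 - gam/2)^2)^M * ip f f"
proof (induction M)
  case 0 then show ?case by simp
next
  case (Suc M)
  have "ip ((Lz ^^ Suc M) f) ((Lz ^^ Suc M) f) \<le> (1 - gam/2)^2 * ip ((Lz ^^ M) f) ((Lz ^^ M) f)"
    using Lz_norm[OF VB_iter[OF f]] by simp
  also have "\<dots> \<le> (1 - gam/2)^2 * (((1 - gam/2)^2)^M * ip f f)"
    using Suc by (intro mult_left_mono) auto
  finally show ?case by (simp add: mult.assoc)
qed

definition oneB :: "nat \<Rightarrow> real" where "oneB = (\<lambda>i. if inB i then 1 else 0)"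

lemma Lz_01:
  assumes "\<And>i. 0 \<le> f i \<and> f i \<le> 1"
  shows "0 \<le> Lz f i \<and> Lz f i \<le> 1"
proof (cases "inB i")
  case True
  then have i: "i < n" unfolding inB_def by simp
  have "0 \<le> Pv f i" unfolding Pv_def using assms P_nonneg i by (intro sum_nonneg mult_nonneg_nonneg) auto
  moreover have "Pv f i \<le> (\<Sum>j<n. P i j * 1)"
    unfolding Pv_def using assms P_nonneg i by (intro sum_mono mult_left_mono) auto
  moreover have "(\<Sum>j<n. P i j * 1) = 1" using P_stoch[OF i] by simp
  ultimately show ?thesis using True assms[of i] unfolding Lz_def by simp
next
  case False then show ?thesis unfolding Lz_def by simp
qed

lemma Lz_iter_01: "0 \<le> (Lz ^^ m) oneB i \<and> (Lz ^^ m) oneB i \<le> 1"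
proof (induction m arbitrary: i)
  case 0 then show ?case unfolding oneB_def by simp
next
  case (Suc m) then show ?case using Lz_01 by simp
qed

end



context hchain begin

lemma main_hchain:
  fixes k :: nat
  shows "\<exists>I \<subseteq> {..<n}. (\<Sum>x\<in>I. pi x) \<ge> 1 - eps / (2 * 3 ^ k) \<and>
           (\<forall>z\<in>I. exp_hit n P A z \<le> ennreal ((3 + real k) * (1 / (1 - eps)) * t_rel n P * ln 3))"
proof -
  obtain g where gA: "\<And>i. (n \<le> i \<or> i \<in> A) \<Longrightarrow> g i = 0"
    and ge: "\<And>i. i < n \<Longrightarrow> i \<notin> A \<Longrightarrow> g i = 1 + (\<Sum>j<n. P i j * g j)"
    using exists_g by blast
  have gV: "VB g" unfolding VB_def inB_def using gA by auto
  have gfix: "g = (\<lambda>i. (1/2) * oneB i + 1 * Lz g i)"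
  proof
    fix i
    show "g i = (1/2) * oneB i + 1 * Lz g i"
    proof (cases "inB i")
      case True
      then have i: "i < n" "i \<notin> A" unfolding inB_def by auto
      have "Pv g i = g i - 1" using ge[OF i] unfolding Pv_def by simp
      then show ?thesis using True unfolding Lz_def oneB_def by (simp add: field_simps)
    next
      case False
      then have "g i = 0" using gA unfolding inB_def by auto
      then show ?thesis using False unfolding Lz_def oneB_def by simp
    qed
  qed
  have decomp: "g = (\<lambda>i. (1/2) * (\<Sum>m<M. (Lz ^^ m) oneB i) + (Lz ^^ M) g i)" for M
  proof (induction M)
    case 0 then show ?case by simp
  next
    case (Suc M)
    have st1: "(Lz ^^ M) g = (Lz ^^ M) (\<lambda>i. (1/2) * oneB i + 1 * Lz g i)"
      using gfix by (rule arg_cong)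
    have st2: "(Lz ^^ M) (\<lambda>i. (1/2) * oneB i + 1 * Lz g i) = (\<lambda>i. (1/2) * (Lz ^^ M) oneB i + 1 * (Lz ^^ M) (Lz g) i)"
      by (rule Lz_iter_lin)
    have st3: "(Lz ^^ M) (Lz g) = (Lz ^^ Suc M) g"
      by (simp only: funpow_Suc_right comp_apply)
    show ?case
    proof
      fix i
      have st_i: "(Lz ^^ M) g i = (1/2) * (Lz ^^ M) oneB i + 1 * (Lz ^^ M) (Lz g) i"
        by (rule fun_cong[OF trans[OF st1 st2]])
      have "g i = (1/2) * (\<Sum>m<M. (Lz ^^ m) oneB i) + (Lz ^^ M) g i"
        by (rule fun_cong[OF Suc.IH])
      also have "\<dots> = (1/2) * (\<Sum>m<M. (Lz ^^ m) oneB i) + ((1/2) * (Lz ^^ M) oneB i + (Lz ^^ Suc M) g i)"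
        by (simp only: st_i st3 mult_1)
      also have "\<dots> = (1/2) * (\<Sum>m<Suc M. (Lz ^^ m) oneB i) + (Lz ^^ Suc M) g i"
        by (simp only: sum.lessThan_Suc distrib_left add.assoc)
      finally show "g i = (1/2) * (\<Sum>m<Suc M. (Lz ^^ m) oneB i) + (Lz ^^ Suc M) g i" .
    qed
  qed
  define G where "G = ip g g"
  have G0: "G \<ge> 0" unfolding G_def by (rule ip_nonneg)
  have Gb: "gam^2 * G \<le> eps"
  proof -
    have "ip g (Pv g) = ip g (\<lambda>i. g i - one i)"
      unfolding ip_def
    proof (intro sum.cong refl)
      fix i assume "i \<in> {..<n}"
      then have i: "i < n" by simp
      show "pi i * g i * Pv g i = pi i * g i * (g i - one i)"
      proof (cases "i \<in> A")
        case True then show ?thesis using gA by simp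
      next
        case False
        then show ?thesis using ge[OF i False] unfolding Pv_def one_def by simp
      qed
    qed
    also have "\<dots> = G - ip g one" unfolding G_def by (simp add: ip_diff2)
    finally have "G - ip g one \<le> (1 - gam) * G" using gap[OF gV] unfolding G_def by simp
    then have g1: "gam * G \<le> ip g one" by (simp add: algebra_simps)
    have "(gam * G)^2 \<le> (ip g one)^2"
      using g1 gam_pos G0 by (intro power_mono) auto
    also have "\<dots> \<le> eps * G" unfolding G_def by (rule cB[OF gV])
    finally have le: "gam^2 * G * G \<le> eps * G" by (simp add: power2_eq_square algebra_simps)
    show ?thesis
    proof (cases "G = 0")
      case True then show ?thesis using eps_pos by simp
    next
      case False
      then have "G > 0" using G0 by simp
      then show ?thesis using le by simp
    qed
  qed
  have ln3: "ln 3 > (1::real)"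
  proof -
    have "exp 1 < (3::real)" using e_less_272 by simp
    then have "ln (exp 1) < ln (3::real)" by (subst ln_less_cancel_iff) auto
    then show ?thesis by simp
  qed
  define T where "T = (3 + real k) * ln 3 / gam"
  define s where "s = 1 / gam"
  define M where "M = nat \<lfloor>2 * (T - s)\<rfloor>"
  have Ts: "T - s \<ge> 0"
  proof -
    have "(3 + real k) * ln 3 \<ge> 1 * 1" using ln3 by (intro mult_mono) auto
    then have "T - s = ((3 + real k) * ln 3 - 1) / gam" unfolding T_def s_def by (simp add: diff_divide_distrib)
    also have "\<dots> \<ge> 0" using gam_pos \<open>(3 + real k) * ln 3 \<ge> 1 * 1\<close> by simp
    finally show ?thesis .
  qed
  have fl: "real M = real_of_int \<lfloor>2 * (T - s)\<rfloor>" unfolding M_def using Ts by simp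
  have M1: "real M \<le> 2 * (T - s)" unfolding fl by (rule of_int_floor_le)
  have M2: "real M \<ge> 2 * (T - s) - 1" unfolding fl using floor_correct[of "2 * (T - s)"] by simp
  define w where "w = (Lz ^^ M) g"
  have gz: "g z \<le> real M / 2 + w z" for z
  proof -
    have "g z = (1/2) * (\<Sum>m<M. (Lz ^^ m) oneB z) + w z"
      unfolding w_def by (subst decomp[of M]) simp
    also have "(\<Sum>m<M. (Lz ^^ m) oneB z) \<le> (\<Sum>m<M. 1)"
      using Lz_iter_01 by (intro sum_mono) auto
    finally show ?thesis by simp
  qed
  define I where "I = {z. z < n \<and> w z \<le> s}"
  have Isub: "I \<subseteq> {..<n}" unfolding I_def by auto
  have target: "T = (3 + real k) * (1 / (1 - eps)) * t_rel n P * ln 3"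
    unfolding T_def gam_def t_rel_def using lam_facts eps_lt1 by (simp add: field_simps)
  have hit: "exp_hit n P A z \<le> ennreal ((3 + real k) * (1 / (1 - eps)) * t_rel n P * ln 3)" if z: "z \<in> I" for z
  proof -
    have zn: "z < n" and wz: "w z \<le> s" using z unfolding I_def by auto
    have "g z \<le> T" using gz[of z] M1 wz by simp
    then have "ennreal (g z) \<le> ennreal T" by (rule ennreal_leI)
    then show ?thesis using exp_hit_le_g[OF gA ge zn] target by simp
  qed
  define Bad where "Bad = {..<n} - I"
  have split: "(\<Sum>x\<in>I. pi x) = 1 - (\<Sum>x\<in>Bad. pi x)"
  proof -
    have "(\<Sum>x<n. pi x) = (\<Sum>x\<in>Bad. pi x) + (\<Sum>x\<in>I. pi x)"
      unfolding Bad_def using Isub by (simp add: sum.subset_diff[of I "{..<n}"])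
    then show ?thesis using pi_sum by simp
  qed
  define c2 where "c2 = (1 - gam/2)^2"
  have wnorm: "ip w w \<le> c2^M * G" unfolding w_def c2_def G_def by (rule Lz_iter_norm[OF gV])
  have Bad1: "s^2 * (\<Sum>x\<in>Bad. pi x) \<le> ip w w"
  proof -
    have "s^2 * (\<Sum>x\<in>Bad. pi x) = (\<Sum>x\<in>Bad. pi x * s^2)" by (simp add: sum_distrib_right mult.commute[of "s^2"])
    also have "\<dots> \<le> (\<Sum>x\<in>Bad. pi x * (w x)^2)"
    proof (intro sum_mono mult_left_mono)
      fix x assume x: "x \<in> Bad"
      then have "w x > s" "x < n" unfolding Bad_def I_def by auto
      moreover have "s > 0" unfolding s_def using gam_pos by simp
      ultimately show "s^2 \<le> (w x)^2" by (intro power_mono) auto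
      show "0 \<le> pi x" using \<open>x < n\<close> pi_pos by (simp add: less_imp_le)
    qed
    also have "\<dots> \<le> (\<Sum>x<n. pi x * (w x)^2)"
      unfolding Bad_def by (intro sum_mono2) (auto intro!: mult_nonneg_nonneg simp: less_imp_le pi_pos)
    also have "\<dots> = ip w w" unfolding ip_def by (simp add: power2_eq_square mult.assoc)
    finally show ?thesis .
  qed
  have c2M: "c2^M \<le> exp (- gam * real M)"
  proof -
    have "1 - gam/2 \<le> exp (- (gam/2))" using exp_ge_add_one_self[of "-(gam/2)"] by simp
    then have "(1 - gam/2)^2 \<le> (exp (- (gam/2)))^2" using gam_le2 by (intro power_mono) auto
    also have "(exp (- (gam/2)))^2 = exp (- gam)" by (simp add: power2_eq_square exp_add[symmetric])
    finally have "c2 \<le> exp (- gam)" unfolding c2_def .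
    then have "c2^M \<le> (exp (- gam))^M" unfolding c2_def by (intro power_mono) auto
    also have "\<dots> = exp (- gam * real M)" by (simp add: exp_of_nat_mult[symmetric] mult.commute)
    finally show ?thesis .
  qed
  have gM: "gam * real M \<ge> 2 * (3 + real k) * ln 3 - 4"
  proof -
    have "gam * real M \<ge> gam * (2 * (T - s) - 1)" using M2 gam_pos by (intro mult_left_mono) auto
    also have "gam * (2 * (T - s) - 1) = 2 * (3 + real k) * ln 3 - 2 - gam"
      unfolding T_def s_def using gam_pos by (simp add: field_simps)
    finally show ?thesis using gam_le2 by simp
  qed
  have e4: "exp (4::real) \<le> 55"
  proof -
    have "exp (4::real) = exp 1 ^ 4" using exp_of_nat_mult[of 4 1] by simp
    also have "\<dots> \<le> (272/100) ^ 4" using e_less_272 by (intro power_mono) auto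
    also have "((272::real)/100) ^ 4 \<le> 55" by (simp add: eval_nat_numeral)
    finally show ?thesis .
  qed
  have p3: "exp (real m * ln 3) = (3::real) ^ m" for m
    using exp_of_nat_mult[of m "ln (3::real)"] by simp
  have expb: "exp (- gam * real M) \<le> 55 / 3 ^ (2 * (3 + k))"
  proof -
    have "exp (- gam * real M) \<le> exp (4 - real (2 * (3 + k)) * ln 3)" using gM by simp
    also have "\<dots> = exp 4 / exp (real (2 * (3 + k)) * ln 3)" by (simp only: exp_diff)
    also have "\<dots> = exp 4 / 3 ^ (2 * (3 + k))" by (simp only: p3)
    also have "\<dots> \<le> 55 / 3 ^ (2 * (3 + k))" using e4 by (intro divide_right_mono) auto
    finally show ?thesis .
  qed
  have badb: "(\<Sum>x\<in>Bad. pi x) \<le> eps / (2 * 3 ^ k)"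
  proof -
    have s2: "s^2 = 1 / gam^2" unfolding s_def by (simp add: power_divide)
    have "s^2 * (\<Sum>x\<in>Bad. pi x) \<le> c2^M * G" using Bad1 wnorm by simp
    also have "\<dots> \<le> c2^M * (eps / gam^2)"
      using Gb gam_pos by (intro mult_left_mono) (auto simp: field_simps c2_def)
    finally have "(\<Sum>x\<in>Bad. pi x) / gam^2 \<le> c2^M * eps / gam^2" using s2 by simp
    then have "(\<Sum>x\<in>Bad. pi x) \<le> c2^M * eps" using gam_pos by (simp add: divide_right_mono_neg field_simps)
    also have "\<dots> \<le> (55 / 3 ^ (2 * (3 + k))) * eps"
      using c2M expb eps_pos by (intro mult_right_mono) auto
    also have "\<dots> \<le> eps / (2 * 3 ^ k)"
    proof -
      have "(3::real) ^ (2 * (3 + k)) = 3^6 * 3^k * 3^k"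
      proof -
        have e: "2 * (3 + k) = 6 + k + k" by simp
        show ?thesis unfolding e by (simp only: power_add)
      qed
      then have "(3::real) ^ (2 * (3 + k)) = 729 * 3^k * 3^k" by simp
      moreover have "(1::real) \<le> 3^k" by simp
      moreover have "(110::real) \<le> 729 * 3^k" using \<open>(1::real) \<le> 3^k\<close> by linarith
      then have "110 * 3^k \<le> 729 * 3^k * (3::real)^k" by (rule mult_right_mono) simp
      ultimately have "110 * 3 ^ k \<le> (3::real) ^ (2 * (3 + k))" by simp
      then show ?thesis using eps_pos by (simp add: field_simps)
    qed
    finally show ?thesis .
  qed
  show ?thesis using Isub split badb hit by (intro exI[of _ I]) auto
qed

end


theorem lemma4p5:
  fixes n :: nat and P :: "nat \<Rightarrow> nat \<Rightarrow> real" and \<pi> :: "nat \<Rightarrow> real"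
    and \<epsilon> :: real and k :: nat and A :: "nat set"
  assumes n2: "n \<ge> 2"
    and P_nonneg: "\<forall>i<n. \<forall>j<n. P i j \<ge> 0"
    and P_stoch: "\<forall>i<n. (\<Sum>j<n. P i j) = 1"
    and pi_pos: "\<forall>i<n. \<pi> i > 0"
    and pi_sum: "(\<Sum>i<n. \<pi> i) = 1"
    and reversible: "\<forall>i<n. \<forall>j<n. \<pi> i * P i j = \<pi> j * P j i"
    and irred: "irreducible_chain n P"
    and eps: "0 < \<epsilon>" "\<epsilon> < 1"
    and A_sub: "A \<subseteq> {..<n}"
    and A_big: "(\<Sum>x\<in>A. \<pi> x) \<ge> 1 - \<epsilon>"
  shows "\<exists>I \<subseteq> {..<n}. (\<Sum>x\<in>I. \<pi> x) \<ge> 1 - \<epsilon> / (2 * 3 ^ k) \<and>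
           (\<forall>z\<in>I. exp_hit n P A z \<le>
              ennreal ((3 + real k) * (1 / (1 - \<epsilon>)) * t_rel n P * ln 3))"
proof -
  interpret hchain n P \<pi> A \<epsilon>
    by unfold_locales (use assms in \<open>auto simp: irred\<close>)
  show ?thesis by (rule main_hchain)
qed

end
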